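(* Consider $\min_{x\in\mathbb{R}^n}\max_{y\in\mathbb{R}^m}f(x,y)$ with $f$ twice differentiable at $(\bar x,\bar y)$. (a) If $\nabla_xf(\bar x,\bar y)=0$, $\nabla_yf(\bar x,\bar y)=0$, $\nabla^2_{yy}f(\bar x,\bar y)\prec0$ and $$\big[\nabla^2_{xx}f-\nabla^2_{xy}f\,(\nabla^2_{yy}f)^{-1}\nabla^2_{yx}f\big](\bar x,\bar y)\succ0,$$ then $(\bar x,\bar y)$ is a calm local minimax point (and hence a local minimax point). (b) If $(\bar x,\bar y)$ is a local minimax point and $\nabla^2_{yy}f(\bar x,\bar y)\prec0$, then $\big[\nabla^2_{xx}f-\nabla^2_{xy}f\,(\nabla^2_{yy}f)^{-1}\nabla^2_{yx}f\big](\bar x,\bar y)\succeq0$.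
   Context: $f:\mathbb{R}^n\times\mathbb{R}^m\to\mathbb{R}$. Standing assumption: for every $x$, $\bar y$ and $\epsilon\ge0$ the maximum of $f(x,\cdot)$ over $\mathbb{B}_\epsilon(\bar y)$ is attained, $\mathbb{B}_\epsilon(z)$ the closed Euclidean ball. A radius function is $\tau:[0,\infty)\to[0,\infty)$ with $\tau(0)=0$, $\tau(\delta)\to0$ as $\delta\downarrow0$; calm at $0$ if $\tau(\delta)\le\kappa\delta$ on $[0,\delta_1]$ for some $\kappa,\delta_1>0$. $(\bar x,\bar y)$ is a local minimax point if there exist $\delta_0>0$ and a radius function $\tau$ with $f(\bar x,y)\le f(\bar x,\bar y)\le\max_{y'\in\mathbb{B}_{\tau(\delta)}(\bar y)}f(x,y')$ for all $\delta\in(0,\delta_0]$, $x\in\mathbb{B}_\delta(\bar x)$, $y\in\mathbb{B}_\delta(\bar y)$; a calm local minimax point if this holds with $\tau$ calm at $0$. $\nabla^2_{xy}f$ is the $n\times m$ block of mixed second derivatives and $\nabla^2_{yx}f=(\nabla^2_{xy}f)^T$; $\succ0$, $\succeq0$, $\prec0$ denote positive definite, positive semidefinite, negative definite. *)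

theory Defs
  imports "HOL-Analysis.Analysis"
begin

definition radius_function :: "(real \<Rightarrow> real) \<Rightarrow> bool" where
  "radius_function \<tau> \<longleftrightarrow> \<tau> 0 = 0 \<and> (\<forall>\<delta>\<ge>0. \<tau> \<delta> \<ge> 0) \<and> (\<tau> \<longlongrightarrow> 0) (at_right 0)"

definition calm_at_0 :: "(real \<Rightarrow> real) \<Rightarrow> bool" where
  "calm_at_0 \<tau> \<longleftrightarrow> (\<exists>\<kappa>>0. \<exists>\<delta>1>0. \<forall>\<delta>\<in>{0..\<delta>1}. \<tau> \<delta> \<le> \<kappa> * \<delta>)"

text \<open>Under the standing
  assumption that maxima over closed balls are attained, the inequality
  f(xb,yb) <= max over the ball is written as existence of a point of the ball.\<close>
definition minimax_with :: "('x::metric_space \<Rightarrow> 'y::metric_space \<Rightarrow> real) \<Rightarrow> 'x \<Rightarrow> 'y \<Rightarrow> real \<Rightarrow> (real \<Rightarrow> real) \<Rightarrow> bool" where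
  "minimax_with f xb yb \<delta>0 \<tau> \<longleftrightarrow>
     (\<forall>\<delta>\<in>{0<..\<delta>0}. \<forall>x\<in>cball xb \<delta>. \<forall>y\<in>cball yb \<delta>.
        f xb y \<le> f xb yb \<and> (\<exists>y'\<in>cball yb (\<tau> \<delta>). f xb yb \<le> f x y'))"

definition local_minimax :: "('x::metric_space \<Rightarrow> 'y::metric_space \<Rightarrow> real) \<Rightarrow> 'x \<Rightarrow> 'y \<Rightarrow> bool" where
  "local_minimax f xb yb \<longleftrightarrow> (\<exists>\<delta>0>0. \<exists>\<tau>. radius_function \<tau> \<and> minimax_with f xb yb \<delta>0 \<tau>)"

definition calm_local_minimax :: "('x::metric_space \<Rightarrow> 'y::metric_space \<Rightarrow> real) \<Rightarrow> 'x \<Rightarrow> 'y \<Rightarrow> bool" where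
  "calm_local_minimax f xb yb \<longleftrightarrow>
     (\<exists>\<delta>0>0. \<exists>\<tau>. radius_function \<tau> \<and> calm_at_0 \<tau> \<and> minimax_with f xb yb \<delta>0 \<tau>)"

definition has_second_derivative_at ::
  "('a::real_normed_vector \<Rightarrow> real) \<Rightarrow> ('a \<Rightarrow> 'a \<Rightarrow>\<^sub>L real) \<Rightarrow> ('a \<Rightarrow>\<^sub>L ('a \<Rightarrow>\<^sub>L real)) \<Rightarrow> 'a \<Rightarrow> bool" where
  "has_second_derivative_at g Dg D2 p \<longleftrightarrow>
     (\<forall>\<^sub>F q in nhds p. (g has_derivative blinfun_apply (Dg q)) (at q)) \<and>
     (Dg has_derivative blinfun_apply D2) (at p)"

definition hess_xx :: "(((real^'n) \<times> (real^'m)) \<Rightarrow>\<^sub>L (((real^'n) \<times> (real^'m)) \<Rightarrow>\<^sub>L real)) \<Rightarrow> real^'n^'n" where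
  "hess_xx D2 = (\<chi> i j. blinfun_apply (blinfun_apply D2 (axis i 1, 0)) (axis j 1, 0))"

definition hess_xy :: "(((real^'n) \<times> (real^'m)) \<Rightarrow>\<^sub>L (((real^'n) \<times> (real^'m)) \<Rightarrow>\<^sub>L real)) \<Rightarrow> real^'m^'n" where
  "hess_xy D2 = (\<chi> i j. blinfun_apply (blinfun_apply D2 (axis i 1, 0)) (0, axis j 1))"

definition hess_yy :: "(((real^'n) \<times> (real^'m)) \<Rightarrow>\<^sub>L (((real^'n) \<times> (real^'m)) \<Rightarrow>\<^sub>L real)) \<Rightarrow> real^'m^'m" where
  "hess_yy D2 = (\<chi> i j. blinfun_apply (blinfun_apply D2 (0, axis i 1)) (0, axis j 1))"

text \<open>Schur complement  Hxx - Hxy Hyy^{-1} Hyx  with Hyx = Hxy^T.\<close>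
definition schur_hess :: "(((real^'n) \<times> (real^'m)) \<Rightarrow>\<^sub>L (((real^'n) \<times> (real^'m)) \<Rightarrow>\<^sub>L real)) \<Rightarrow> real^'n^'n" where
  "schur_hess D2 = hess_xx D2 - hess_xy D2 ** matrix_inv (hess_yy D2) ** transpose (hess_xy D2)"

definition pos_def :: "real^'k^'k \<Rightarrow> bool" where
  "pos_def A \<longleftrightarrow> (\<forall>v. v \<noteq> 0 \<longrightarrow> v \<bullet> (A *v v) > 0)"

definition pos_semidef :: "real^'k^'k \<Rightarrow> bool" where
  "pos_semidef A \<longleftrightarrow> (\<forall>v. v \<bullet> (A *v v) \<ge> 0)"

definition neg_def :: "real^'k^'k \<Rightarrow> bool" where
  "neg_def A \<longleftrightarrow> (\<forall>v. v \<noteq> 0 \<longrightarrow> v \<bullet> (A *v v) < 0)"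

end

theory Submission
  imports Defs
begin

lemma schur_identity:
  fixes H :: "real^'m^'m" and M :: "real^'m^'n" and A :: "real^'n^'n"
  assumes symH: "transpose H = H" and inv: "H ** W = mat 1"
  shows "u \<bullet> (A *v u) + 2 * (u \<bullet> (M *v v)) + v \<bullet> (H *v v) =
     u \<bullet> ((A - M ** W ** transpose M) *v u)
     + (v + W *v (transpose M *v u)) \<bullet> (H *v (v + W *v (transpose M *v u)))"
proof -
  define z where "z = transpose M *v u"
  have 1: "u \<bullet> (M *v x) = z \<bullet> x" for x
    unfolding z_def by (metis dot_lmul_matrix transpose_matrix_vector)
  have 2: "x \<bullet> (H *v y) = y \<bullet> (H *v x)" for x y
    by (metis dot_lmul_matrix inner_commute symH transpose_matrix_vector)
  have 3: "H *v (W *v z) = z"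
    by (simp add: matrix_vector_mul_assoc inv)
  have 4: "(A - M ** W ** transpose M) *v u = A *v u - M *v (W *v z)"
    unfolding z_def by (simp add: matrix_vector_mult_diff_rdistrib matrix_vector_mul_assoc[symmetric] del: transpose_matrix_vector)
  have 5: "(v + W *v z) \<bullet> (H *v (v + W *v z)) = v \<bullet> (H *v v) + 2 * (z \<bullet> v) + z \<bullet> (W *v z)"
    using 2[of v "W *v z"] 3
    by (simp add: matrix_vector_right_distrib inner_add_left inner_add_right inner_commute)
  show ?thesis
    unfolding z_def[symmetric] 4 5 using 1[of v] 1[of "W *v z"]
    by (simp add: inner_diff_right)
qed

lemma sd_nbhd:
  fixes g :: "'a::real_normed_vector \<Rightarrow> real"
  assumes "has_second_derivative_at g Dg D2 p"
  shows "\<exists>r0>0. \<forall>q. norm (q - p) < r0 \<longrightarrow> (g has_derivative blinfun_apply (Dg q)) (at q)"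
  using assms unfolding has_second_derivative_at_def eventually_nhds_metric dist_norm by blast

lemma sd_est:
  fixes g :: "'a::real_normed_vector \<Rightarrow> real"
  assumes "has_second_derivative_at g Dg D2 p" "e > 0"
  shows "\<exists>d>0. \<forall>q. norm (q - p) < d \<longrightarrow> norm (Dg q - Dg p - blinfun_apply D2 (q - p)) \<le> e * norm (q - p)"
  using assms unfolding has_second_derivative_at_def has_derivative_at_alt by blast

lemma sd_sym_aux:
  fixes g :: "'a::real_normed_vector \<Rightarrow> real"
  assumes sd: "has_second_derivative_at g Dg D2 p" and e: "e > 0"
  shows "\<exists>r>0. \<forall>h k. norm h \<le> r \<longrightarrow> norm k \<le> r \<longrightarrow>
     \<bar>g (p + h + k) - g (p + h) - g (p + k) + g p - blinfun_apply (blinfun_apply D2 k) h\<bar> \<le> 3 * e * r * norm h"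
proof -
  obtain r0 where r0: "r0 > 0" "\<And>q. norm (q - p) < r0 \<Longrightarrow> (g has_derivative blinfun_apply (Dg q)) (at q)"
    using sd_nbhd[OF sd] by blast
  obtain d where d: "d > 0" "\<And>q. norm (q - p) < d \<Longrightarrow> norm (Dg q - Dg p - blinfun_apply D2 (q - p)) \<le> e * norm (q - p)"
    using sd_est[OF sd e] by blast
  define r where "r = min d r0 / 3"
  have r: "r > 0" using r0 d by (simp add: r_def)
  show ?thesis
  proof (intro exI[of _ r] conjI allI impI r)
    fix h k :: 'a assume h: "norm h \<le> r" and k: "norm k \<le> r"
    define F where "F x = g (p + x + k) - g (p + x) - blinfun_apply (blinfun_apply D2 k) x" for x
    let ?S = "cball (0::'a) r"
    have der: "(F has_derivative blinfun_apply (Dg (p + x + k) - Dg (p + x) - blinfun_apply D2 k)) (at x within ?S)"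
      if x: "x \<in> ?S" for x
    proof -
      have nx: "norm x \<le> r" using x by simp
      have "norm (x + k) \<le> 2 * r" using norm_triangle_ineq[of x k] nx k by linarith
      hence a: "norm ((p + x + k) - p) < r0" "norm ((p + x) - p) < r0"
        using r r0 nx unfolding r_def by (auto simp: add.assoc)
      have c1: "((\<lambda>x. p + x + k) has_derivative (\<lambda>y. y)) (at x)"
        by (auto intro!: derivative_eq_intros)
      have "(g \<circ> (\<lambda>x. p + x + k) has_derivative blinfun_apply (Dg (p + x + k)) \<circ> (\<lambda>y. y)) (at x)"
        by (rule diff_chain_at[OF c1]) (use r0(2)[OF a(1)] in simp)
      hence g1: "((\<lambda>x. g (p + x + k)) has_derivative blinfun_apply (Dg (p + x + k))) (at x)"
        by (simp add: o_def)
      have c2: "((\<lambda>x. p + x) has_derivative (\<lambda>y. y)) (at x)"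
        by (auto intro!: derivative_eq_intros)
      have "(g \<circ> (\<lambda>x. p + x) has_derivative blinfun_apply (Dg (p + x)) \<circ> (\<lambda>y. y)) (at x)"
        by (rule diff_chain_at[OF c2]) (use r0(2)[OF a(2)] in simp)
      hence g2: "((\<lambda>x. g (p + x)) has_derivative blinfun_apply (Dg (p + x))) (at x)"
        by (simp add: o_def)
      have "(F has_derivative (\<lambda>y. blinfun_apply (Dg (p + x + k)) y - blinfun_apply (Dg (p + x)) y - blinfun_apply (blinfun_apply D2 k) y)) (at x)"
        unfolding F_def by (intro derivative_intros g1 g2 bounded_linear_imp_has_derivative blinfun.bounded_linear_right)
      moreover have "blinfun_apply (Dg (p + x + k) - Dg (p + x) - blinfun_apply D2 k) =
         (\<lambda>y. blinfun_apply (Dg (p + x + k)) y - blinfun_apply (Dg (p + x)) y - blinfun_apply (blinfun_apply D2 k) y)"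
        by (rule ext) (simp add: blinfun.diff_left)
      ultimately show ?thesis
        by (simp add: has_derivative_at_withinI)
    qed
    have bnd: "onorm (blinfun_apply (Dg (p + x + k) - Dg (p + x) - blinfun_apply D2 k)) \<le> 3 * e * r"
      if x: "x \<in> ?S" for x
    proof -
      have nx: "norm x \<le> r" using x by simp
      have nxk: "norm (x + k) \<le> 2 * r" using norm_triangle_ineq[of x k] nx k by linarith
      hence a: "norm ((p + x + k) - p) < d" "norm ((p + x) - p) < d"
        using r d nx unfolding r_def by (auto simp: add.assoc)
      have e1: "norm (Dg (p + x + k) - Dg p - blinfun_apply D2 (x + k)) \<le> e * norm (x + k)"
        using d(2)[OF a(1)] by (simp add: add.assoc)
      have e2: "norm (Dg (p + x) - Dg p - blinfun_apply D2 x) \<le> e * norm x"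
        using d(2)[OF a(2)] by simp
      have eq: "Dg (p + x + k) - Dg (p + x) - blinfun_apply D2 k =
          (Dg (p + x + k) - Dg p - blinfun_apply D2 (x + k)) - (Dg (p + x) - Dg p - blinfun_apply D2 x)"
        by (simp add: blinfun.add_right algebra_simps)
      have "norm (Dg (p + x + k) - Dg (p + x) - blinfun_apply D2 k) \<le> e * norm (x + k) + e * norm x"
        unfolding eq using norm_triangle_ineq4 e1 e2 by (smt (verit))
      also have "\<dots> = e * (norm (x + k) + norm x)" by (simp add: algebra_simps)
      also have "\<dots> \<le> e * (3 * r)" using nxk nx e
        by (intro mult_left_mono) auto
      also have "\<dots> = 3 * e * r" by simp
      finally show ?thesis by (simp add: norm_blinfun.rep_eq)
    qed
    have "norm (F h - F 0) \<le> 3 * e * r * norm (h - 0)"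
      by (rule differentiable_bound[OF convex_cball der bnd]) (use h r in auto)
    thus "\<bar>g (p + h + k) - g (p + h) - g (p + k) + g p - blinfun_apply (blinfun_apply D2 k) h\<bar> \<le> 3 * e * r * norm h"
      unfolding F_def by (simp add: algebra_simps)
  qed
qed

lemma sd_sym:
  fixes g :: "'a::real_normed_vector \<Rightarrow> real"
  assumes sd: "has_second_derivative_at g Dg D2 p"
  shows "blinfun_apply (blinfun_apply D2 a) b = blinfun_apply (blinfun_apply D2 b) a"
proof -
  define s where "s = norm a + norm b + 1"
  have s: "s > 0" "norm a \<le> s" "norm b \<le> s" unfolding s_def
    using norm_ge_zero[of a] norm_ge_zero[of b] by linarith+
  define X where "X = \<bar>blinfun_apply (blinfun_apply D2 a) b - blinfun_apply (blinfun_apply D2 b) a\<bar>"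
  have main: "X \<le> 6 * e * s^2" if e: "e > 0" for e
  proof -
    obtain r where r: "r > 0" and R: "\<And>h k. norm h \<le> r \<Longrightarrow> norm k \<le> r \<Longrightarrow>
     \<bar>g (p + h + k) - g (p + h) - g (p + k) + g p - blinfun_apply (blinfun_apply D2 k) h\<bar> \<le> 3 * e * r * norm h"
      using sd_sym_aux[OF sd e] by blast
    define c where "c = r / s"
    have c: "c > 0" using r s by (simp add: c_def)
    have nh: "norm (c *\<^sub>R a) \<le> r" "norm (c *\<^sub>R b) \<le> r"
      using s r c by (auto simp: c_def field_simps intro: mult_left_mono)
    have b1: "3 * e * r * norm (c *\<^sub>R a) \<le> 3 * e * r * r" "3 * e * r * norm (c *\<^sub>R b) \<le> 3 * e * r * r"
      using nh e r by (auto intro!: mult_left_mono)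
    note A1 = R[OF nh(1) nh(2)]
    note A2 = R[OF nh(2) nh(1)]
    have comm: "p + c *\<^sub>R b + c *\<^sub>R a = p + c *\<^sub>R a + c *\<^sub>R b" by (simp add: algebra_simps)
    have "c^2 * X \<le> 6 * e * r * r"
    proof -
      have "c^2 * X = \<bar>blinfun_apply (blinfun_apply D2 (c *\<^sub>R a)) (c *\<^sub>R b) - blinfun_apply (blinfun_apply D2 (c *\<^sub>R b)) (c *\<^sub>R a)\<bar>"
        unfolding X_def using c
        by (simp add: blinfun.scaleR_left blinfun.scaleR_right power2_eq_square abs_mult right_diff_distrib[symmetric] mult.assoc)
      also have "\<dots> \<le> 6 * e * r * r"
        using A1 A2 b1 unfolding comm by linarith
      finally show ?thesis .
    qed
    hence "(r / s)^2 * X \<le> 6 * e * r * r" by (simp add: c_def)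
    hence "r^2 * X \<le> 6 * e * r^2 * s^2" using s
      by (simp add: power_divide field_simps power2_eq_square)
    thus ?thesis using r
      by (metis mult.commute mult.left_commute mult_le_cancel_left_pos zero_less_power)
  qed
  have "X = 0"
  proof (rule ccontr)
    assume "X \<noteq> 0"
    hence Xp: "X > 0" unfolding X_def by simp
    have "X \<le> 6 * (X / (12 * s^2)) * s^2" using main[of "X / (12 * s^2)"] Xp s by simp
    thus False using Xp s by (simp add: field_simps)
  qed
  thus ?thesis unfolding X_def by simp
qed

lemma sd_taylor:
  fixes g :: "'a::real_normed_vector \<Rightarrow> real"
  assumes sd: "has_second_derivative_at g Dg D2 p" and e: "e > 0"
  shows "\<exists>d>0. \<forall>h. norm h < d \<longrightarrow>
     \<bar>g (p + h) - g p - blinfun_apply (Dg p) h - blinfun_apply (blinfun_apply D2 h) h / 2\<bar> \<le> e * (norm h)^2"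
proof -
  obtain r0 where r0: "r0 > 0" "\<And>q. norm (q - p) < r0 \<Longrightarrow> (g has_derivative blinfun_apply (Dg q)) (at q)"
    using sd_nbhd[OF sd] by blast
  obtain d1 where d1: "d1 > 0" "\<And>q. norm (q - p) < d1 \<Longrightarrow> norm (Dg q - Dg p - blinfun_apply D2 (q - p)) \<le> e * norm (q - p)"
    using sd_est[OF sd e] by blast
  show ?thesis
  proof (intro exI[of _ "min r0 d1"] conjI allI impI)
    show "min r0 d1 > 0" using r0 d1 by simp
    fix h :: 'a assume h: "norm h < min r0 d1"
    define G where "G x = g (p + x) - blinfun_apply (Dg p) x - blinfun_apply (blinfun_apply D2 x) x / 2" for x
    let ?S = "cball (0::'a) (norm h)"
    have der: "(G has_derivative blinfun_apply (Dg (p + x) - Dg p - blinfun_apply D2 x)) (at x within ?S)"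
      if x: "x \<in> ?S" for x
    proof -
      have a: "norm ((p + x) - p) < r0" using x h by simp
      have c2: "((\<lambda>x. p + x) has_derivative (\<lambda>y. y)) (at x)"
        by (auto intro!: derivative_eq_intros)
      have "(g \<circ> (\<lambda>x. p + x) has_derivative blinfun_apply (Dg (p + x)) \<circ> (\<lambda>y. y)) (at x)"
        by (rule diff_chain_at[OF c2]) (use r0(2)[OF a] in simp)
      hence g2: "((\<lambda>x. g (p + x)) has_derivative blinfun_apply (Dg (p + x))) (at x)"
        by (simp add: o_def)
      have q: "((\<lambda>x. blinfun_apply (blinfun_apply D2 x) x) has_derivative (\<lambda>y. blinfun_apply (blinfun_apply D2 x) y + blinfun_apply (blinfun_apply D2 y) x)) (at x)"
        by (auto intro!: derivative_eq_intros)
      have q2: "((\<lambda>x. blinfun_apply (blinfun_apply D2 x) x / 2) has_derivative (\<lambda>y. (blinfun_apply (blinfun_apply D2 x) y + blinfun_apply (blinfun_apply D2 y) x) / 2)) (at x)"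
      proof -
        have "(\<lambda>h. (blinfun_apply (blinfun_apply D2 x) h * 2 + blinfun_apply (blinfun_apply D2 h) x * 2) / 4)
           = (\<lambda>y. (blinfun_apply (blinfun_apply D2 x) y + blinfun_apply (blinfun_apply D2 y) x) / 2)"
          by (rule ext) (simp add: field_simps)
        thus ?thesis using has_derivative_divide'[OF q has_derivative_const, of 2] by simp
      qed
      have "(G has_derivative (\<lambda>y. blinfun_apply (Dg (p + x)) y - blinfun_apply (Dg p) y - (blinfun_apply (blinfun_apply D2 x) y + blinfun_apply (blinfun_apply D2 y) x) / 2)) (at x)"
        unfolding G_def by (intro derivative_intros g2 q2 bounded_linear_imp_has_derivative blinfun.bounded_linear_right)
      moreover have "blinfun_apply (Dg (p + x) - Dg p - blinfun_apply D2 x) =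
         (\<lambda>y. blinfun_apply (Dg (p + x)) y - blinfun_apply (Dg p) y - (blinfun_apply (blinfun_apply D2 x) y + blinfun_apply (blinfun_apply D2 y) x) / 2)"
        by (rule ext) (simp add: blinfun.diff_left sd_sym[OF sd, of _ x])
      ultimately show ?thesis
        by (simp add: has_derivative_at_withinI)
    qed
    have bnd: "onorm (blinfun_apply (Dg (p + x) - Dg p - blinfun_apply D2 x)) \<le> e * norm h"
      if x: "x \<in> ?S" for x
    proof -
      have a: "norm ((p + x) - p) < d1" using x h by simp
      have "norm (Dg (p + x) - Dg p - blinfun_apply D2 x) \<le> e * norm x" using d1(2)[OF a] by simp
      also have "\<dots> \<le> e * norm h" using x e by (simp add: mult_left_mono)
      finally show ?thesis by (simp add: norm_blinfun.rep_eq)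
    qed
    have "norm (G h - G 0) \<le> e * norm h * norm (h - 0)"
      by (rule differentiable_bound[OF convex_cball der bnd]) auto
    thus "\<bar>g (p + h) - g p - blinfun_apply (Dg p) h - blinfun_apply (blinfun_apply D2 h) h / 2\<bar> \<le> e * (norm h)^2"
      unfolding G_def by (simp add: power2_eq_square mult.assoc)
  qed
qed

lemma lin_expand:
  fixes L :: "real^'n \<Rightarrow> real"
  assumes "linear L"
  shows "L x = (\<Sum>i\<in>UNIV. x$i * L (axis i 1))"
proof -
  have "L x = L (\<Sum>i\<in>UNIV. x$i *\<^sub>R axis i 1)"
    using basis_expansion[of x] by (simp add: scalar_mult_eq_scaleR)
  also have "\<dots> = (\<Sum>i\<in>UNIV. x$i * L (axis i 1))"
    using assms by (simp add: linear_sum linear_scale o_def)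
  finally show ?thesis .
qed

lemma bil_expand:
  fixes B :: "real^'n \<Rightarrow> real^'k \<Rightarrow> real"
  assumes l1: "\<And>y. linear (\<lambda>x. B x y)" and l2: "\<And>x. linear (B x)"
  shows "B x y = x \<bullet> ((\<chi> i j. B (axis i 1) (axis j 1)) *v y)"
proof -
  have "B x y = (\<Sum>i\<in>UNIV. x$i * B (axis i 1) y)"
    using lin_expand[OF l1[of y], of x] by simp
  also have "\<dots> = (\<Sum>i\<in>UNIV. x$i * (\<Sum>j\<in>UNIV. y$j * B (axis i 1) (axis j 1)))"
  proof -
    have "B (axis i 1) y = (\<Sum>j\<in>UNIV. y$j * B (axis i 1) (axis j 1))" for i
      by (rule lin_expand[OF l2])
    thus ?thesis by simp
  qed
  also have "\<dots> = x \<bullet> ((\<chi> i j. B (axis i 1) (axis j 1)) *v y)"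
    by (simp add: inner_vec_def matrix_vector_mult_def mult_ac)
  finally show ?thesis .
qed

lemma Q_expand:
  fixes D2 :: "((real^'n) \<times> (real^'m)) \<Rightarrow>\<^sub>L (((real^'n) \<times> (real^'m)) \<Rightarrow>\<^sub>L real)"
  assumes sym: "\<And>a b. blinfun_apply (blinfun_apply D2 a) b = blinfun_apply (blinfun_apply D2 b) a"
  shows "blinfun_apply (blinfun_apply D2 (u, v)) (u, v) =
     u \<bullet> (hess_xx D2 *v u) + 2 * (u \<bullet> (hess_xy D2 *v v)) + v \<bullet> (hess_yy D2 *v v)"
proof -
  let ?D = "\<lambda>a b. blinfun_apply (blinfun_apply D2 a) b"
  have pl: "(x + x', 0::real^'m) = (x, 0) + (x', 0)" "(0::real^'n, y + y') = (0, y) + (0, y')"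
    "(c *\<^sub>R x, 0::real^'m) = c *\<^sub>R (x, 0)" "(0::real^'n, c *\<^sub>R y) = c *\<^sub>R (0, y)"
    for x x' :: "real^'n" and y y' :: "real^'m" and c :: real by simp_all
  have lx1: "linear (\<lambda>x. ?D (x, 0) z)" for z
    by (rule linearI) (simp_all only: pl blinfun.bilinear_simps)
  have lx2: "linear (\<lambda>x. ?D z (x, 0))" for z
    by (rule linearI) (simp_all only: pl blinfun.bilinear_simps)
  have ly1: "linear (\<lambda>y. ?D (0, y) z)" for z
    by (rule linearI) (simp_all only: pl blinfun.bilinear_simps)
  have ly2: "linear (\<lambda>y. ?D z (0, y))" for z
    by (rule linearI) (simp_all only: pl blinfun.bilinear_simps)
  have xx: "?D (u, 0) (u, 0) = u \<bullet> (hess_xx D2 *v u)"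
    unfolding hess_xx_def by (rule bil_expand[where B="\<lambda>x y. ?D (x, 0) (y, 0)"]) (rule lx1, rule lx2)
  have xy: "?D (u, 0) (0, v) = u \<bullet> (hess_xy D2 *v v)"
    unfolding hess_xy_def by (rule bil_expand[where B="\<lambda>x y. ?D (x, 0) (0, y)"]) (rule lx1, rule ly2)
  have yy: "?D (0, v) (0, v) = v \<bullet> (hess_yy D2 *v v)"
    unfolding hess_yy_def by (rule bil_expand[where B="\<lambda>x y. ?D (0, x) (0, y)"]) (rule ly1, rule ly2)
  have uv: "(u, v) = (u, 0) + (0, v)" by simp
  have "?D (u, v) (u, v) = ?D (u, 0) (u, 0) + ?D (u, 0) (0, v) + ?D (0, v) (u, 0) + ?D (0, v) (0, v)"
    by (subst uv)+ (simp only: blinfun.bilinear_simps add_ac)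
  also have "\<dots> = u \<bullet> (hess_xx D2 *v u) + 2 * (u \<bullet> (hess_xy D2 *v v)) + v \<bullet> (hess_yy D2 *v v)"
    using xx xy yy sym[of "(0, v)" "(u, 0)"] by simp
  finally show ?thesis .
qed

lemma hess_yy_sym:
  fixes D2 :: "((real^'n) \<times> (real^'m)) \<Rightarrow>\<^sub>L (((real^'n) \<times> (real^'m)) \<Rightarrow>\<^sub>L real)"
  assumes sym: "\<And>a b. blinfun_apply (blinfun_apply D2 a) b = blinfun_apply (blinfun_apply D2 b) a"
  shows "transpose (hess_yy D2) = hess_yy D2"
  unfolding hess_yy_def transpose_def using sym by (simp add: vec_eq_iff)

lemma pos_def_bound:
  fixes A :: "real^'k^'k"
  assumes "pos_def A"
  shows "\<exists>c>0. \<forall>v. v \<bullet> (A *v v) \<ge> c * (norm v)^2"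
proof -
  let ?f = "\<lambda>v. v \<bullet> (A *v v)"
  have ne: "sphere (0::real^'k) 1 \<noteq> {}"
  proof -
    have "axis undefined 1 \<in> sphere (0::real^'k) 1" by (simp add: norm_axis_1)
    thus ?thesis by blast
  qed
  have cont: "continuous_on (sphere 0 1) ?f"
    by (intro continuous_intros linear_continuous_on matrix_vector_mul_bounded_linear)
  obtain w where w: "w \<in> sphere 0 1" and wmin: "\<And>y. y \<in> sphere 0 1 \<Longrightarrow> ?f w \<le> ?f y"
    using continuous_attains_inf[OF compact_sphere ne cont] by blast
  have "w \<noteq> 0" using w by auto
  hence c: "?f w > 0" using assms unfolding pos_def_def by blast
  show ?thesis
  proof (intro exI[of _ "?f w"] conjI allI c)
    fix v :: "real^'k"
    show "?f w * (norm v)^2 \<le> ?f v"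
    proof (cases "v = 0")
      case True thus ?thesis by simp
    next
      case False
      define y where "y = (1 / norm v) *\<^sub>R v"
      have y: "y \<in> sphere 0 1" using False by (simp add: y_def)
      have vy: "v = norm v *\<^sub>R y" using False by (simp add: y_def)
      have "?f v = (norm v)^2 * ?f y"
        by (subst vy, subst vy) (simp add: matrix_vector_mult_scaleR power2_eq_square)
      moreover have "?f w * (norm v)^2 \<le> ?f y * (norm v)^2"
        using wmin[OF y] by (rule mult_right_mono) simp
      ultimately show ?thesis by (simp add: mult.commute)
    qed
  qed
qed

lemma neg_def_bound:
  fixes A :: "real^'k^'k"
  assumes "neg_def A"
  shows "\<exists>c>0. \<forall>v. v \<bullet> (A *v v) \<le> - c * (norm v)^2"
proof -
  have m: "((-1::real) *\<^sub>R A) *v v = - (A *v v)" for v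
    by (metis scaleR_matrix_vector_assoc scaleR_minus1_left)
  have "pos_def ((-1::real) *\<^sub>R A)" using assms unfolding pos_def_def neg_def_def m by simp
  then obtain c where c: "c > 0" "\<And>v. v \<bullet> (((-1::real) *\<^sub>R A) *v v) \<ge> c * (norm v)^2"
    using pos_def_bound by blast
  have "v \<bullet> (A *v v) \<le> - c * (norm v)^2" for v
    using c(2)[of v] unfolding m by simp
  thus ?thesis using c(1) by blast
qed

lemma neg_def_inv:
  fixes A :: "real^'k^'k"
  assumes "neg_def A"
  shows "A ** matrix_inv A = mat 1"
proof -
  have "\<forall>x. A *v x = 0 \<longrightarrow> x = 0" using assms unfolding neg_def_def by force
  hence "invertible A" using matrix_left_invertible_ker invertible_left_inverse by blast
  thus ?thesis unfolding invertible_def matrix_inv_def by (metis (mono_tags, lifting) someI_ex)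
qed

lemma elem1:
  fixes A B T :: real
  assumes T: "T > 0" and H: "\<And>t. 0 < t \<Longrightarrow> t < T \<Longrightarrow> 0 \<le> t * A + t^2 * B"
  shows "A \<ge> 0"
proof (rule ccontr)
  assume "\<not> A \<ge> 0"
  hence A: "A < 0" by simp
  define t where "t = min (T / 2) (- A / (2 * (\<bar>B\<bar> + 1)))"
  have t: "0 < t" "t < T" using T A by (auto simp: t_def field_simps)
  have "t * \<bar>B\<bar> \<le> (- A / (2 * (\<bar>B\<bar> + 1))) * \<bar>B\<bar>"
    by (rule mult_right_mono) (auto simp: t_def)
  also have "\<dots> \<le> - A / 2"
    using A by (auto simp: field_simps)
  finally have "t * B \<le> - A / 2" by (smt (verit) mult_left_mono t(1) abs_ge_self)
  hence "A + t * B < 0" using A by linarith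
  hence "t * (A + t * B) < 0" using t by (simp add: mult_pos_neg)
  moreover have "t * (A + t * B) = t * A + t^2 * B" by (simp add: algebra_simps power2_eq_square)
  ultimately show False using H[OF t] by linarith
qed

lemma elem3:
  fixes X C e0 :: real
  assumes e0: "e0 > 0" and C: "C \<ge> 0" and H: "\<And>e. 0 < e \<Longrightarrow> e \<le> e0 \<Longrightarrow> 0 \<le> X + e * C"
  shows "X \<ge> 0"
proof (rule ccontr)
  assume "\<not> X \<ge> 0"
  hence X: "X < 0" by simp
  define e where "e = min e0 (- X / (2 * (C + 1)))"
  have e: "0 < e" "e \<le> e0" using e0 X C by (auto simp: e_def field_simps)
  have "e * C \<le> (- X / (2 * (C + 1))) * C"
    by (rule mult_right_mono) (auto simp: e_def C)
  also have "\<dots> \<le> - X / 2"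
    using X C by (auto simp: field_simps)
  finally show False using H[OF e] X by linarith
qed

lemma taylor_pair:
  fixes f :: "'x::real_normed_vector \<Rightarrow> 'y::real_normed_vector \<Rightarrow> real"
  assumes sd: "has_second_derivative_at (\<lambda>z. f (fst z) (snd z)) Dg D2 (xb, yb)" and e: "e > 0"
  shows "\<exists>d>0. \<forall>u v. norm (u, v) < d \<longrightarrow>
     \<bar>f (xb + u) (yb + v) - f xb yb - blinfun_apply (Dg (xb, yb)) (u, v)
       - blinfun_apply (blinfun_apply D2 (u, v)) (u, v) / 2\<bar> \<le> e * ((norm u)^2 + (norm v)^2)"
proof -
  obtain d where d: "d > 0" and D: "\<And>h. norm h < d \<Longrightarrow>
     \<bar>(\<lambda>z. f (fst z) (snd z)) ((xb, yb) + h) - (\<lambda>z. f (fst z) (snd z)) (xb, yb) - blinfun_apply (Dg (xb, yb)) h - blinfun_apply (blinfun_apply D2 h) h / 2\<bar> \<le> e * (norm h)^2"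
    using sd_taylor[OF sd e] by blast
  have n: "(norm (u, v))^2 = (norm u)^2 + (norm v)^2" for u :: 'x and v :: 'y
    by (simp add: norm_Pair)
  show ?thesis
    using d D[of "(u, v)" for u v] by (intro exI[of _ d]) (simp add: n)
qed


theorem mainTheorem16:
  fixes f :: "real^'n \<Rightarrow> real^'m \<Rightarrow> real"
    and xb :: "real^'n" and yb :: "real^'m"
    and Dg :: "((real^'n) \<times> (real^'m)) \<Rightarrow> (((real^'n) \<times> (real^'m)) \<Rightarrow>\<^sub>L real)"
    and D2 :: "((real^'n) \<times> (real^'m)) \<Rightarrow>\<^sub>L (((real^'n) \<times> (real^'m)) \<Rightarrow>\<^sub>L real)"
  assumes standing: "\<And>x y0 \<epsilon>. \<epsilon> \<ge> 0 \<Longrightarrow> \<exists>y\<in>cball y0 \<epsilon>. \<forall>y'\<in>cball y0 \<epsilon>. f x y' \<le> f x y"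
    and twice: "has_second_derivative_at (\<lambda>z. f (fst z) (snd z)) Dg D2 (xb, yb)"
  shows "((\<forall>u. blinfun_apply (Dg (xb, yb)) (u, 0) = 0) \<and> (\<forall>v. blinfun_apply (Dg (xb, yb)) (0, v) = 0) \<and>
           neg_def (hess_yy D2) \<and> pos_def (schur_hess D2)
          \<longrightarrow> calm_local_minimax f xb yb \<and> local_minimax f xb yb)
       \<and> (local_minimax f xb yb \<and> neg_def (hess_yy D2) \<longrightarrow> pos_semidef (schur_hess D2))"
proof -
  define H where "H = hess_yy D2"
  define M where "M = hess_xy D2"
  define W where "W = matrix_inv H"
  define S where "S = schur_hess D2"
  define v0 where "v0 u = W *v (transpose M *v u)" for u :: "real^'n"
  define Q where "Q u v = blinfun_apply (blinfun_apply D2 (u, v)) (u, v)" for u :: "real^'n" and v :: "real^'m"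
  define a where "a u = blinfun_apply (Dg (xb, yb)) (u, 0)" for u :: "real^'n"
  have sym: "\<And>a b. blinfun_apply (blinfun_apply D2 a) b = blinfun_apply (blinfun_apply D2 b) a"
    by (rule sd_sym[OF twice])
  have symH: "transpose H = H" unfolding H_def by (rule hess_yy_sym[OF sym])
  have KI: "Q u v = u \<bullet> (S *v u) + (v + v0 u) \<bullet> (H *v (v + v0 u))"
    if nd: "neg_def H" for u v
    unfolding Q_def Q_expand[OF sym] S_def schur_hess_def v0_def W_def M_def[symmetric] H_def[symmetric]
    by (rule schur_identity[OF symH neg_def_inv[OF nd]])
  obtain K where K: "K > 0" "\<And>u. norm (v0 u) \<le> norm u * K"
  proof -
    have "v0 = (\<lambda>u. (W ** transpose M) *v u)"
      unfolding v0_def by (rule ext) (simp only: matrix_vector_mul_assoc)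
    hence "bounded_linear v0" by simp
    thus ?thesis using bounded_linear.pos_bounded that by blast
  qed
  have v0_scale: "v0 (t *\<^sub>R u) = t *\<^sub>R v0 u" for t u
    unfolding v0_def by (simp add: matrix_vector_mult_scaleR)
  have v0_0: "v0 0 = 0" unfolding v0_def by simp
  have npair: "norm (u, v) \<le> norm u + norm v" for u :: "real^'n" and v :: "real^'m"
    by (rule norm_Pair_le)
  show ?thesis
  proof (intro conjI impI)
    assume A: "(\<forall>u. blinfun_apply (Dg (xb, yb)) (u, 0) = 0) \<and> (\<forall>v. blinfun_apply (Dg (xb, yb)) (0, v) = 0) \<and>
           neg_def (hess_yy D2) \<and> pos_def (schur_hess D2)"
    hence nd: "neg_def H" and pd: "pos_def S" unfolding H_def S_def by auto
    have grad0: "blinfun_apply (Dg (xb, yb)) (u, v) = 0" for u v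
    proof -
      have "(u, v) = (u, 0) + (0, v)" by simp
      hence "blinfun_apply (Dg (xb, yb)) (u, v) = blinfun_apply (Dg (xb, yb)) (u, 0) + blinfun_apply (Dg (xb, yb)) (0, v)"
        by (metis blinfun.add_right)
      thus ?thesis using A by simp
    qed
    obtain cH where cH: "cH > 0" "\<And>v. v \<bullet> (H *v v) \<le> - cH * (norm v)^2"
      using neg_def_bound[OF nd] by blast
    obtain cS where cS: "cS > 0" "\<And>v. v \<bullet> (S *v v) \<ge> cS * (norm v)^2"
      using pos_def_bound[OF pd] by blast
    define e where "e = min (cH / 4) (cS / (4 * (1 + K^2)))"
    have pk: "4 * (1 + K^2) > 0" by (simp add: add_pos_nonneg)
    have e: "e > 0" "e \<le> cH / 4" "e \<le> cS / (4 * (1 + K^2))"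
    proof -
      show "e > 0" using cH(1) cS(1) pk unfolding e_def by (simp del: distrib_left_numeral)
      show "e \<le> cH / 4" unfolding e_def by (rule min.cobounded1)
      show "e \<le> cS / (4 * (1 + K^2))" unfolding e_def by (rule min.cobounded2)
    qed
    obtain d where d: "d > 0" and T: "\<And>u v. norm (u, v) < d \<Longrightarrow>
     \<bar>f (xb + u) (yb + v) - f xb yb - blinfun_apply (Dg (xb, yb)) (u, v) - Q u v / 2\<bar> \<le> e * ((norm u)^2 + (norm v)^2)"
      using taylor_pair[OF twice e(1)] unfolding Q_def by blast
    define \<delta>0 where "\<delta>0 = d / (2 * (1 + K))"
    have pK: "1 + K > 0" using K by simp
    have e3: "(1 + K) * \<delta>0 = d / 2" unfolding \<delta>0_def using pK by (simp add: field_simps)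
    have \<delta>0: "\<delta>0 > 0" "\<delta>0 < d" "(1 + K) * \<delta>0 < d"
    proof -
      show "\<delta>0 > 0" unfolding \<delta>0_def using d pK by simp
      then have "\<delta>0 \<le> (1 + K) * \<delta>0" using K by (simp add: algebra_simps)
      then show "\<delta>0 < d" using e3 d by linarith
      show "(1 + K) * \<delta>0 < d" using e3 d by simp
    qed
    define \<tau> where "\<tau> \<delta> = K * \<delta>" for \<delta> :: real
    have rf: "radius_function \<tau>"
      unfolding radius_function_def \<tau>_def using K
      by (auto intro!: tendsto_eq_intros)
    have calm: "calm_at_0 \<tau>"
      unfolding calm_at_0_def \<tau>_def using K by (intro exI[of _ K] conjI exI[of _ 1]) auto
    have mm: "minimax_with f xb yb \<delta>0 \<tau>"
      unfolding minimax_with_def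
    proof (intro ballI conjI)
      fix \<delta> x y assume \<delta>: "\<delta> \<in> {0<..\<delta>0}" and x: "x \<in> cball xb \<delta>" and y: "y \<in> cball yb \<delta>"
      define v where "v = y - yb"
      have nv: "norm v \<le> \<delta>" using y by (simp add: v_def dist_norm norm_minus_commute)
      have "norm ((0::real^'n), v) < d" using nv \<delta> \<delta>0 by simp
      note T1 = T[OF this]
      have Qv: "Q 0 v \<le> - cH * (norm v)^2"
        using KI[OF nd, of 0 v] cH(2)[of v] by (simp add: v0_0)
      have T1': "\<bar>f xb (yb + v) - f xb yb - Q 0 v / 2\<bar> \<le> e * (norm v)^2"
        using T1 grad0[of 0 v] by simp
      have ee: "e * (norm v)^2 \<le> cH / 4 * (norm v)^2"
        using e(2) by (rule mult_right_mono) simp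
      have "f xb (yb + v) - f xb yb \<le> 0"
        using T1' ee Qv by (simp add: abs_le_iff)
      thus "f xb y \<le> f xb yb" by (simp add: v_def)
    next
      fix \<delta> x y assume \<delta>: "\<delta> \<in> {0<..\<delta>0}" and x: "x \<in> cball xb \<delta>" and y: "y \<in> cball yb \<delta>"
      define u where "u = x - xb"
      define v where "v = - v0 u"
      have nu: "norm u \<le> \<delta>" using x by (simp add: u_def dist_norm norm_minus_commute)
      have nv: "norm v \<le> K * norm u" using K(2)[of u] by (simp add: v_def mult.commute)
      have "norm (u, v) \<le> norm u + K * norm u" using npair[of u v] nv by linarith
      also have "\<dots> = (1 + K) * norm u" by (simp add: algebra_simps)
      also have "\<dots> \<le> (1 + K) * \<delta>0" using nu \<delta> K by (intro mult_left_mono) auto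
      finally have "norm (u, v) < d" using \<delta>0 by linarith
      note T1 = T[OF this]
      have Qu: "Q u v \<ge> cS * (norm u)^2"
        using KI[OF nd, of u v] cS(2)[of u] by (simp add: v_def)
      have nv2: "(norm v)^2 \<le> K^2 * (norm u)^2"
        using nv by (metis norm_ge_zero power_mono power_mult_distrib)
      have "e * ((norm u)^2 + (norm v)^2) \<le> (cS / (4 * (1 + K^2))) * ((1 + K^2) * (norm u)^2)"
        using e nv2 by (intro mult_mono) (auto simp: algebra_simps)
      also have "\<dots> = cS / 4 * (norm u)^2"
      proof -
        have nz: "1 + K^2 \<noteq> 0" using pk by auto
        show ?thesis using nz by (simp add: divide_simps del: distrib_left_numeral)
      qed
      finally have "e * ((norm u)^2 + (norm v)^2) \<le> cS / 4 * (norm u)^2" .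
      moreover have T1': "\<bar>f (xb + u) (yb + v) - f xb yb - Q u v / 2\<bar> \<le> e * ((norm u)^2 + (norm v)^2)"
        using T1 grad0[of u v] by simp
      moreover have "0 \<le> cS * (norm u)^2" using cS(1) by simp
      ultimately have "f (xb + u) (yb + v) - f xb yb \<ge> 0"
        using Qu by (simp add: abs_le_iff)
      moreover have "yb + v \<in> cball yb (\<tau> \<delta>)"
      proof -
        have "K * norm u \<le> K * \<delta>" using nu K by (intro mult_left_mono) auto
        hence "norm v \<le> K * \<delta>" using nv by linarith
        thus ?thesis by (simp add: \<tau>_def dist_norm)
      qed
      ultimately show "\<exists>y'\<in>cball yb (\<tau> \<delta>). f xb yb \<le> f x y'"
        by (intro bexI[of _ "yb + v"]) (auto simp: u_def)
    qed
    show "calm_local_minimax f xb yb"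
      unfolding calm_local_minimax_def using \<delta>0 rf calm mm by blast
    thus "local_minimax f xb yb"
      unfolding calm_local_minimax_def local_minimax_def by blast
  next
    assume B: "local_minimax f xb yb \<and> neg_def (hess_yy D2)"
    hence nd: "neg_def H" unfolding H_def by simp
    obtain \<delta>0 \<tau> where \<delta>0: "\<delta>0 > 0" and rf: "radius_function \<tau>" and mm: "minimax_with f xb yb \<delta>0 \<tau>"
      using B unfolding local_minimax_def by blast
    obtain cH where cH: "cH > 0" "\<And>v. v \<bullet> (H *v v) \<le> - cH * (norm v)^2"
      using neg_def_bound[OF nd] by blast
    have gp: "((\<lambda>z. f (fst z) (snd z)) has_derivative blinfun_apply (Dg (xb, yb))) (at (xb, yb))"
      using sd_nbhd[OF twice] by auto
    have gy: "blinfun_apply (Dg (xb, yb)) (0, v) = 0" for v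
    proof -
      have c: "((\<lambda>y. (xb, y)) has_derivative (\<lambda>v. (0, v))) (at yb)"
        by (auto intro!: derivative_eq_intros)
      have "((\<lambda>z. f (fst z) (snd z)) \<circ> (\<lambda>y. (xb, y)) has_derivative blinfun_apply (Dg (xb, yb)) \<circ> (\<lambda>v. (0, v))) (at yb)"
        by (rule diff_chain_at[OF c]) (use gp in simp)
      hence hd: "((\<lambda>y. f xb y) has_derivative (\<lambda>v. blinfun_apply (Dg (xb, yb)) (0, v))) (at yb)"
        by (simp add: o_def)
      have mono: "\<forall>y\<in>ball yb \<delta>0. f xb y \<le> f xb yb"
      proof
        fix y assume "y \<in> ball yb \<delta>0"
        hence y: "y \<in> cball yb \<delta>0" by simp
        have "\<delta>0 \<in> {0<..\<delta>0}" "xb \<in> cball xb \<delta>0" using \<delta>0 by auto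
        thus "f xb y \<le> f xb yb" using mm y unfolding minimax_with_def by blast
      qed
      have "(\<lambda>v. blinfun_apply (Dg (xb, yb)) (0, v)) = (\<lambda>v. 0)"
        by (rule differential_zero_maxmin[OF _ open_ball hd]) (use \<delta>0 mono in auto)
      thus ?thesis by (metis)
    qed
    have grad: "blinfun_apply (Dg (xb, yb)) (t *\<^sub>R u, w) = t * a u" for t u w
    proof -
      have "(t *\<^sub>R u, w) = t *\<^sub>R (u, 0) + (0, w)" by simp
      hence "blinfun_apply (Dg (xb, yb)) (t *\<^sub>R u, w) = t *\<^sub>R blinfun_apply (Dg (xb, yb)) (u, 0) + blinfun_apply (Dg (xb, yb)) (0, w)"
        by (metis blinfun.add_right blinfun.scaleR_right)
      thus ?thesis using gy by (simp add: a_def)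
    qed
    have claim: "\<exists>T>0. \<forall>t. 0 < t \<and> t < T \<longrightarrow>
        0 \<le> t * a u + t^2 * (u \<bullet> (S *v u) / 2 + e * ((norm u)^2 + 2 * (norm (v0 u))^2))"
      if u: "u \<noteq> 0" and e: "0 < e" "e \<le> cH / 4" for u e
    proof -
      obtain d where d: "d > 0" and T: "\<And>u v. norm (u, v) < d \<Longrightarrow>
       \<bar>f (xb + u) (yb + v) - f xb yb - blinfun_apply (Dg (xb, yb)) (u, v) - Q u v / 2\<bar> \<le> e * ((norm u)^2 + (norm v)^2)"
        using taylor_pair[OF twice e(1)] unfolding Q_def by blast
      have "\<forall>\<^sub>F s in at_right 0. dist (\<tau> s) 0 < d / 2"
        using rf d unfolding radius_function_def by (intro tendstoD) auto
      then obtain \<eta> where \<eta>: "\<eta> > 0" and \<eta>': "\<And>s. 0 < s \<Longrightarrow> s < \<eta> \<Longrightarrow> \<bar>\<tau> s\<bar> < d / 2"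
        unfolding eventually_at_right_field by auto
      have nu: "norm u > 0" using u by simp
      define T0 where "T0 = min (\<delta>0 / norm u) (min (\<eta> / norm u) (d / (2 * norm u)))"
      have T0: "T0 > 0" using \<delta>0 \<eta> d nu by (simp add: T0_def)
      show ?thesis
      proof (intro exI[of _ T0] conjI allI impI T0)
        fix t assume t: "0 < t \<and> t < T0"
        define \<delta> where "\<delta> = t * norm u"
        have "t < \<delta>0 / norm u" "t < \<eta> / norm u" "t < d / (2 * norm u)" using t by (auto simp: T0_def)
        hence \<delta>: "\<delta> < \<delta>0" "\<delta> < \<eta>" "\<delta> < d / 2" "\<delta> > 0"
          using nu t by (auto simp: \<delta>_def field_simps)
        have x: "xb + t *\<^sub>R u \<in> cball xb \<delta>" using t by (simp add: \<delta>_def dist_norm)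
        have y: "yb \<in> cball yb \<delta>" using \<delta> by simp
        obtain y' where y': "y' \<in> cball yb (\<tau> \<delta>)" and fy': "f xb yb \<le> f (xb + t *\<^sub>R u) y'"
          using mm \<delta> x y unfolding minimax_with_def by fastforce
        define w where "w = y' - yb"
        have nw: "norm w < d / 2" using y' \<eta>'[of \<delta>] \<delta> by (simp add: w_def dist_norm norm_minus_commute)
        have "norm (t *\<^sub>R u, w) \<le> \<delta> + norm w" using npair[of "t *\<^sub>R u" w] t by (simp add: \<delta>_def)
        hence "norm (t *\<^sub>R u, w) < d" using nw \<delta> by linarith
        note T1 = T[OF this]
        have yw: "yb + w = y'" by (simp add: w_def)
        define z where "z = w + v0 (t *\<^sub>R u)"
        define U where "U = (norm u)^2"
        define N where "N = (norm (v0 u))^2"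
        define Z where "Z = (norm z)^2"
        define P where "P = t^2 * (u \<bullet> (S *v u))"
        have F1: "0 \<le> f (xb + t *\<^sub>R u) (yb + w) - f xb yb" using fy' yw by simp
        have F2: "f (xb + t *\<^sub>R u) (yb + w) - f xb yb \<le> t * a u + Q (t *\<^sub>R u) w / 2 + e * (t^2 * U + (norm w)^2)"
          using T1 grad[of t u w] t by (simp add: abs_le_iff U_def power_mult_distrib)
        have F3: "Q (t *\<^sub>R u) w \<le> P - cH * Z"
          using KI[OF nd, of "t *\<^sub>R u" w] cH(2)[of z]
          by (simp add: P_def Z_def z_def matrix_vector_mult_scaleR power2_eq_square)
        have F4: "(norm w)^2 \<le> 2 * Z + 2 * t^2 * N"
        proof -
          have "w = z - t *\<^sub>R v0 u" by (simp add: z_def v0_scale)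
          hence "norm w \<le> norm z + t * norm (v0 u)" using t by (metis abs_of_pos norm_scaleR norm_triangle_ineq4)
          hence "(norm w)^2 \<le> (norm z + t * norm (v0 u))^2" by (simp add: power_mono)
          also have "\<dots> \<le> 2 * (norm z)^2 + 2 * (t * norm (v0 u))^2"
            by (smt (verit, best) zero_le_power2 power2_sum sum_squares_bound)
          finally show ?thesis by (simp add: Z_def N_def power_mult_distrib)
        qed
        have F5: "e * (t^2 * U + (norm w)^2) \<le> e * t^2 * U + 2 * e * Z + 2 * e * t^2 * N"
        proof -
          have "e * (t^2 * U + (norm w)^2) \<le> e * (t^2 * U + (2 * Z + 2 * t^2 * N))"
            using F4 e by (intro mult_left_mono) auto
          thus ?thesis by (simp add: algebra_simps)
        qed
        have F6: "2 * e * Z \<le> cH / 2 * Z"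
          using e(2) by (intro mult_right_mono) (auto simp: Z_def)
        have G: "t * a u + t^2 * (u \<bullet> (S *v u) / 2 + e * (U + 2 * N)) = t * a u + P / 2 + e * t^2 * U + 2 * e * t^2 * N"
          by (simp add: P_def algebra_simps)
        show "0 \<le> t * a u + t^2 * (u \<bullet> (S *v u) / 2 + e * ((norm u)^2 + 2 * (norm (v0 u))^2))"
          using F1 F2 F3 F5 F6 G unfolding U_def[symmetric] N_def[symmetric] by linarith
      qed
    qed
    have a_minus: "a (- u) = - a u" for u
    proof -
      have "(- u, 0::real^'m) = - (u, 0)" by simp
      thus ?thesis unfolding a_def by (metis blinfun.minus_right)
    qed
    have a0: "a u = 0" for u
    proof (cases "u = 0")
      case True thus ?thesis unfolding a_def using gy[of 0] by simp
    next
      case False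
      have e4: "0 < cH / 4" "cH / 4 \<le> cH / 4" using cH by auto
      have ge: "a v \<ge> 0" if vnz: "v \<noteq> 0" for v
      proof -
        obtain T where T: "T > 0" and TT: "\<And>t. 0 < t \<and> t < T \<Longrightarrow>
          0 \<le> t * a v + t^2 * (v \<bullet> (S *v v) / 2 + cH / 4 * ((norm v)^2 + 2 * (norm (v0 v))^2))"
          using claim[OF vnz e4] by blast
        show ?thesis
          by (rule elem1[OF T, where B="v \<bullet> (S *v v) / 2 + cH / 4 * ((norm v)^2 + 2 * (norm (v0 v))^2)"])
             (rule TT, simp)
      qed
      have "a u \<ge> 0" "a (- u) \<ge> 0" using ge False by auto
      thus ?thesis using a_minus[of u] by linarith
    qed
    have "u \<bullet> (S *v u) \<ge> 0" for u
    proof (cases "u = 0")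
      case True thus ?thesis by simp
    next
      case False
      have "0 \<le> u \<bullet> (S *v u) / 2 + e * ((norm u)^2 + 2 * (norm (v0 u))^2)"
        if e: "0 < e" "e \<le> cH / 4" for e
      proof -
        obtain T where T: "T > 0" and TT: "\<And>t. 0 < t \<and> t < T \<Longrightarrow>
          0 \<le> t * a u + t^2 * (u \<bullet> (S *v u) / 2 + e * ((norm u)^2 + 2 * (norm (v0 u))^2))"
          using claim[OF False e] by blast
        have "0 \<le> (T/2)^2 * (u \<bullet> (S *v u) / 2 + e * ((norm u)^2 + 2 * (norm (v0 u))^2))"
          using TT[of "T/2"] T a0[of u] by simp
        moreover have "(T/2)^2 > 0" using T by simp
        ultimately show ?thesis by (simp add: zero_le_mult_iff)
      qed
      hence "u \<bullet> (S *v u) / 2 \<ge> 0"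
      proof -
        assume h: "\<And>e. 0 < e \<Longrightarrow> e \<le> cH / 4 \<Longrightarrow> 0 \<le> u \<bullet> (S *v u) / 2 + e * ((norm u)^2 + 2 * (norm (v0 u))^2)"
        have "cH / 4 > 0" using cH by simp
        moreover have "(norm u)^2 + 2 * (norm (v0 u))^2 \<ge> 0" by simp
        ultimately show ?thesis using elem3 h by blast
      qed
      thus ?thesis by simp
    qed
    thus "pos_semidef (schur_hess D2)" unfolding pos_semidef_def S_def by blast
  qed
qed

end
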